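(* Let $\{A_n\}_{n\geqslant 1}$ be i.i.d. nonnegative random variables with Laplace–Stieltjes transform $\alpha(s)=\mathbb{E}[e^{-sA_1}]$, and let $\{B_n\}_{n\geqslant 1}$ be i.i.d. exponentially distributed with rate $\mu>0$, independent of $\{A_n\}$. Let $W_1=B_1$ and $W_{n+1}=\max\{0,\,B_{n+1}-A_n-W_n\}$ for $n\geqslant 1$. Then for every $n\geqslant 1$ and $x\geqslant 0$, $$\mathbb{P}[W_{n+1}\leqslant x]=1-e^{-\mu x}\left[\frac{2\alpha(\mu)}{2+\alpha(\mu)}+\left(-\frac{\alpha(\mu)}{2}\right)^{n-1}\left(\frac{1}{2}\alpha(\mu)-\frac{2\alpha(\mu)}{2+\alpha(\mu)}\right)\right].$$ *)

theory Defs
  imports "HOL-Probability.Probability"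
begin

text \<open>Indices start at 1; the value at index 0 is irrelevant junk.
  W 1 = B 1 and W (n+1) = max 0 (B (n+1) - A n - W n) for n >= 1.\<close>
fun Wseq :: "(nat \<Rightarrow> 'a \<Rightarrow> real) \<Rightarrow> (nat \<Rightarrow> 'a \<Rightarrow> real) \<Rightarrow> nat \<Rightarrow> 'a \<Rightarrow> real" where
  "Wseq A B 0 \<omega> = 0"
| "Wseq A B (Suc 0) \<omega> = B 1 \<omega>"
| "Wseq A B (Suc (Suc n)) \<omega> =
     max 0 (B (Suc (Suc n)) \<omega> - A (Suc n) \<omega> - Wseq A B (Suc n) \<omega>)"

definition LST :: "'a measure \<Rightarrow> ('a \<Rightarrow> real) \<Rightarrow> real \<Rightarrow> real" where
  "LST M X s = (\<integral>\<omega>. exp (- s * X \<omega>) \<partial>M)"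

end

theory Submission
  imports Defs
begin

lemma measure_exp_le:
  assumes l: "0 < l" and "0 \<le> z"
  shows "measure (density lborel (exponential_density l)) {..z} = 1 - exp (- l * z)"
proof -
  have "emeasure (density lborel (exponential_density l)) {..z} = ennreal (1 - exp (- l * z))"
    using emeasure_erlang_density[OF l, of 0 z] assms by (simp add: erlang_CDF_0)
  moreover have "exp (- l * z) \<le> 1" using assms by simp
  ultimately show ?thesis by (simp add: measure_def)
qed

lemma measure_exp_gt:
  assumes l: "0 < l" and "0 \<le> z"
  shows "measure (density lborel (exponential_density l)) {z<..} = exp (- l * z)"
proof -
  interpret prob_space "density lborel (exponential_density l)"
    using prob_space_exponential_density[OF l] .
  have "{z<..} = space (density lborel (exponential_density l)) - {..z}" by auto
  then have "measure (density lborel (exponential_density l)) {z<..} = 1 - measure (density lborel (exponential_density l)) {..z}"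
    using prob_compl[of "{..z}"] by simp
  then show ?thesis using measure_exp_le[OF assms] by simp
qed

lemma inner_exp:
  assumes l: "0 < l" and z: "0 \<le> z"
  shows "(\<integral>b. exp (- l * max 0 (b - z)) \<partial>density lborel (exponential_density l)) = 1 - exp (- l * z) / 2"
proof -
  let ?D = "density lborel (exponential_density l)"
  let ?D2 = "density lborel (exponential_density (2*l))"
  interpret prob_space ?D using prob_space_exponential_density[OF l] .
  have l2: "0 < 2*l" using l by simp
  have eq: "\<And>b. exp (- l * max 0 (b - z)) = indicator {..z} b + indicator {z<..} b * (exp (l * z) * exp (- l * b))"
    by (auto simp: indicator_def max_def exp_add[symmetric] algebra_simps)
  have i1: "integrable ?D (indicator {..z} :: real \<Rightarrow> real)"
    by (rule integrable_const_bound[where B=1]) auto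
  have i2: "integrable ?D (\<lambda>b. indicator {z<..} b * (exp (l * z) * exp (- l * b)))"
  proof (rule integrable_const_bound[where B=1])
    show "AE x in ?D. norm (indicator {z<..} x * (exp (l * z) * exp (- l * x))) \<le> (1::real)"
    proof (rule AE_I2)
      fix x
      have "x > z \<Longrightarrow> exp (l * z) * exp (- l * x) \<le> 1"
        using l by (simp add: exp_add[symmetric] mult_left_mono)
      then show "norm (indicator {z<..} x * (exp (l * z) * exp (- l * x))) \<le> (1::real)"
        by (auto simp: indicator_def)
    qed
  qed auto
  have "(\<integral>b. indicator {z<..} b * (exp (l * z) * exp (- l * b)) \<partial>?D)
     = (\<integral>b. exponential_density l b *\<^sub>R (indicator {z<..} b * (exp (l * z) * exp (- l * b))) \<partial>lborel)"
    by (rule integral_density) (use l in \<open>auto simp: exponential_density_nonneg\<close>)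
  also have "\<dots> = (\<integral>b. exp (l * z) / 2 * (exponential_density (2*l) b *\<^sub>R indicator {z<..} b) \<partial>lborel)"
    by (rule Bochner_Integration.integral_cong)
       (auto simp: exponential_density_def indicator_def exp_add[symmetric] algebra_simps)
  also have "\<dots> = exp (l * z) / 2 * (\<integral>b. exponential_density (2*l) b *\<^sub>R indicator {z<..} b \<partial>lborel)"
    by simp
  also have "(\<integral>b. exponential_density (2*l) b *\<^sub>R indicator {z<..} b \<partial>lborel) = measure ?D2 {z<..}"
    using integral_density[of "indicator {z<..} :: real \<Rightarrow> real" lborel "exponential_density (2*l)"] l
    by (simp add: exponential_density_nonneg)
  also have "\<dots> = exp (- (2*l) * z)"
    using measure_exp_gt[OF l2 z] by simp
  finally have 2: "(\<integral>b. indicator {z<..} b * (exp (l * z) * exp (- l * b)) \<partial>?D) = exp (- l * z) / 2"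
    by (simp add: exp_add[symmetric] algebra_simps)
  have "(\<integral>b. exp (- l * max 0 (b - z)) \<partial>?D) = (\<integral>b. indicator {..z} b + indicator {z<..} b * (exp (l * z) * exp (- l * b)) \<partial>?D)"
    by (subst eq) (rule refl)
  also have "\<dots> = (\<integral>b. indicator {..z} b \<partial>?D) + (\<integral>b. indicator {z<..} b * (exp (l * z) * exp (- l * b)) \<partial>?D)"
    by (rule Bochner_Integration.integral_add[OF i1 i2])
  also have "\<dots> = 1 - exp (- l * z) / 2"
    using measure_exp_le[OF l z] 2 by simp
  finally show ?thesis .
qed


lemma fubini_indep:
  fixes X Y :: "'a \<Rightarrow> real" and h :: "real \<times> real \<Rightarrow> real"
  assumes P: "prob_space M" and ind: "prob_space.indep_var M borel X borel Y"
    and hm[measurable]: "h \<in> borel_measurable (borel \<Otimes>\<^sub>M borel)" and hb: "\<And>p. \<bar>h p\<bar> \<le> 1"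
  shows "(\<integral>\<omega>. h (X \<omega>, Y \<omega>) \<partial>M) = (\<integral>y. (\<integral>x. h (x,y) \<partial>distr M borel X) \<partial>distr M borel Y)"
proof -
  interpret prob_space M by fact
  have rv: "X \<in> borel_measurable M" "Y \<in> borel_measurable M"
    and eq: "distr M borel X \<Otimes>\<^sub>M distr M borel Y = distr M (borel \<Otimes>\<^sub>M borel) (\<lambda>x. (X x, Y x))"
    using ind indep_var_distribution_eq by auto
  note [measurable] = rv
  interpret PX: prob_space "distr M borel X" by (rule prob_space_distr) (use rv in auto)
  interpret PY: prob_space "distr M borel Y" by (rule prob_space_distr) (use rv in auto)
  interpret PP: pair_sigma_finite "distr M borel X" "distr M borel Y" ..
  interpret PXY: prob_space "distr M borel X \<Otimes>\<^sub>M distr M borel Y"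
    by (simp add: PX.prob_space_axioms PY.prob_space_axioms prob_space_pair)
  have int: "integrable (distr M borel X \<Otimes>\<^sub>M distr M borel Y) (case_prod (\<lambda>x y. h (x,y)))"
    by (rule PXY.integrable_const_bound[where B=1]) (use hb in auto)
  have "(\<integral>\<omega>. h (X \<omega>, Y \<omega>) \<partial>M) = (\<integral>p. h p \<partial>distr M (borel \<Otimes>\<^sub>M borel) (\<lambda>x. (X x, Y x)))"
    by (subst integral_distr) auto
  also have "\<dots> = (\<integral>p. h p \<partial>(distr M borel X \<Otimes>\<^sub>M distr M borel Y))" by (simp add: eq)
  also have "\<dots> = (\<integral>y. (\<integral>x. h (x,y) \<partial>distr M borel X) \<partial>distr M borel Y)"
    using PP.integral_snd[OF int] by simp
  finally show ?thesis .
qed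

lemma core:
  assumes P: "prob_space M" and l: "0 < l"
    and Bd: "distributed M lborel B (exponential_density l)"
    and Zm[measurable]: "Z \<in> borel_measurable M" and Zn: "AE \<omega> in M. 0 \<le> Z \<omega>"
    and ind: "prob_space.indep_var M borel B borel Z"
  shows core_prob: "0 \<le> x \<Longrightarrow> measure M {\<omega>\<in>space M. max 0 (B \<omega> - Z \<omega>) \<le> x} = 1 - exp (- l * x) * (\<integral>\<omega>. exp (- l * Z \<omega>) \<partial>M)"
    and core_exp: "(\<integral>\<omega>. exp (- l * max 0 (B \<omega> - Z \<omega>)) \<partial>M) = 1 - (\<integral>\<omega>. exp (- l * Z \<omega>) \<partial>M) / 2"
proof -
  interpret prob_space M by fact
  have Bm[measurable]: "B \<in> borel_measurable M"
    using distributed_measurable[OF Bd] by simp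
  have PB: "distr M borel B = density lborel (exponential_density l)"
    using distributed_distr_eq_density[OF Bd] distr_cong[of M M lborel borel B B] by simp
  interpret PZ: prob_space "distr M borel Z" by (rule prob_space_distr) simp
  interpret PD: prob_space "density lborel (exponential_density l)"
    using prob_space_exponential_density[OF l] .
  have m1: "(\<lambda>z. \<integral>b. exp (- l * max 0 (b - z)) \<partial>density lborel (exponential_density l)) \<in> borel_measurable borel"
    by (rule PD.borel_measurable_lebesgue_integral) auto
  have m2: "(\<lambda>z. \<integral>b. (indicator {p. x < fst p - snd p} (b, z) :: real) \<partial>density lborel (exponential_density l)) \<in> borel_measurable (borel :: real measure)"
  proof -
    have "(\<lambda>z. \<integral>b. (of_bool (x < b - z)::real) \<partial>density lborel (exponential_density l)) \<in> borel_measurable borel"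
      by (rule PD.borel_measurable_lebesgue_integral) auto
    moreover have "(\<lambda>z. \<integral>b. indicator {p. x < fst p - snd p} (b, z) \<partial>density lborel (exponential_density l)) = (\<lambda>z. \<integral>b. (of_bool (x < b - z)::real) \<partial>density lborel (exponential_density l))"
      by (simp add: indicator_def)
    ultimately show ?thesis by simp
  qed
  have AEz: "AE z in distr M borel Z. 0 \<le> z"
    using Zn by (subst AE_distr_iff) auto
  have iE: "integrable M (\<lambda>\<omega>. exp (- l * Z \<omega>))"
    by (rule integrable_const_bound[where B=1]) (use Zn l in \<open>auto elim!: AE_mp\<close>)
  show "(\<integral>\<omega>. exp (- l * max 0 (B \<omega> - Z \<omega>)) \<partial>M) = 1 - (\<integral>\<omega>. exp (- l * Z \<omega>) \<partial>M) / 2"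
  proof -
    have "(\<integral>\<omega>. exp (- l * max 0 (B \<omega> - Z \<omega>)) \<partial>M) = (\<integral>\<omega>. (\<lambda>p. exp (- l * max 0 (fst p - snd p))) (B \<omega>, Z \<omega>) \<partial>M)"
      by simp
    also have "\<dots> = (\<integral>z. (\<integral>b. exp (- l * max 0 (b - z)) \<partial>distr M borel B) \<partial>distr M borel Z)"
      by (subst fubini_indep[OF P ind]) (use l in auto)
    also have "\<dots> = (\<integral>z. 1 - exp (- l * z) / 2 \<partial>distr M borel Z)"
    proof -
      have "AE z in distr M borel Z. (\<integral>b. exp (- l * max 0 (b - z)) \<partial>density lborel (exponential_density l)) = 1 - exp (- l * z) / 2"
        using AEz by eventually_elim (rule inner_exp[OF l])
      then show ?thesis unfolding PB using m1 by (intro integral_cong_AE) auto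
    qed
    also have "\<dots> = (\<integral>\<omega>. 1 - exp (- l * Z \<omega>) / 2 \<partial>M)"
      by (subst integral_distr) auto
    also have "\<dots> = 1 - (\<integral>\<omega>. exp (- l * Z \<omega>) \<partial>M) / 2"
      using iE by (simp add: prob_space)
    finally show ?thesis .
  qed
  assume x: "0 \<le> x"
  have "measure M {\<omega>\<in>space M. x < B \<omega> - Z \<omega>} = (\<integral>\<omega>. indicator {\<omega>\<in>space M. x < B \<omega> - Z \<omega>} \<omega> \<partial>M)"
    by simp
  also have "\<dots> = (\<integral>\<omega>. (\<lambda>p. indicator {p. x < fst p - snd p} p) (B \<omega>, Z \<omega>) \<partial>M)"
    by (intro Bochner_Integration.integral_cong) (auto simp: indicator_def)
  also have "\<dots> = (\<integral>z. (\<integral>b. indicator {p. x < fst p - snd p} (b, z) \<partial>distr M borel B) \<partial>distr M borel Z)"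
    by (subst fubini_indep[OF P ind]) auto
  also have "\<dots> = (\<integral>z. exp (- l * x) * exp (- l * z) \<partial>distr M borel Z)"
    unfolding PB
  proof (intro integral_cong_AE)
    show "AE z in distr M borel Z. (\<integral>b. indicator {p. x < fst p - snd p} (b, z) \<partial>density lborel (exponential_density l)) = exp (- l * x) * exp (- l * z)"
      using AEz
    proof (rule AE_mp, intro AE_I2 impI)
      fix z :: real assume z: "0 \<le> z"
      have "(\<integral>b. indicator {p. x < fst p - snd p} (b, z) \<partial>density lborel (exponential_density l)) = (\<integral>b. indicator {x + z<..} b \<partial>density lborel (exponential_density l))"
        by (intro Bochner_Integration.integral_cong) (auto simp: indicator_def)
      also have "\<dots> = exp (- l * (x + z))"
        using measure_exp_gt[OF l, of "x+z"] x z by simp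
      finally show "(\<integral>b. indicator {p. x < fst p - snd p} (b, z) \<partial>density lborel (exponential_density l)) = exp (- l * x) * exp (- l * z)"
        by (simp add: exp_add[symmetric] algebra_simps)
    qed
  qed (use m2 in auto)
  also have "\<dots> = (\<integral>\<omega>. exp (- l * x) * exp (- l * Z \<omega>) \<partial>M)"
    by (subst integral_distr) auto
  also have "\<dots> = exp (- l * x) * (\<integral>\<omega>. exp (- l * Z \<omega>) \<partial>M)"
    by simp
  finally have gt: "measure M {\<omega>\<in>space M. x < B \<omega> - Z \<omega>} = exp (- l * x) * (\<integral>\<omega>. exp (- l * Z \<omega>) \<partial>M)" .
  have "{\<omega>\<in>space M. max 0 (B \<omega> - Z \<omega>) \<le> x} = space M - {\<omega>\<in>space M. x < B \<omega> - Z \<omega>}"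
    using x by auto
  then show "measure M {\<omega>\<in>space M. max 0 (B \<omega> - Z \<omega>) \<le> x} = 1 - exp (- l * x) * (\<integral>\<omega>. exp (- l * Z \<omega>) \<partial>M)"
    using gt prob_compl[of "{\<omega>\<in>space M. x < B \<omega> - Z \<omega>}"] by simp
qed


lemma Wf_eq:
  "(\<And>i. 1 \<le> i \<Longrightarrow> i < n \<Longrightarrow> f (Inl i) = A i \<omega>) \<Longrightarrow> (\<And>i. 1 \<le> i \<Longrightarrow> i \<le> n \<Longrightarrow> f (Inr i) = B i \<omega>)
   \<Longrightarrow> Wseq (\<lambda>i f. f (Inl i)) (\<lambda>i f. f (Inr i)) n f = Wseq A B n \<omega>"
proof (induction A B n \<omega> rule: Wseq.induct)
  case (3 A B n \<omega>)
  then show ?case by simp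
qed auto

lemma comp_meas: "(\<lambda>f. f j) \<in> borel_measurable (PiM K (\<lambda>_. (borel::real measure)))"
proof (cases "j \<in> K")
  case True then show ?thesis by (rule measurable_component_singleton)
next
  case False
  have "\<forall>f\<in>space (PiM K (\<lambda>_. (borel::real measure))). f j = undefined"
    using False by (auto simp: space_PiM PiE_def extensional_def)
  then show ?thesis by (subst measurable_cong[where g="\<lambda>_. undefined"]) auto
qed

lemma Wf_meas: "Wseq (\<lambda>i f. f (Inl i)) (\<lambda>i f. f (Inr i)) n \<in> borel_measurable (PiM K (\<lambda>_. (borel::real measure)))"
proof (induction n rule: less_induct)
  case (less n)
  show ?case
  proof (cases n)
    case 0 then show ?thesis by simp
  next
    case (Suc m)
    show ?thesis
    proof (cases m)
      case 0 then show ?thesis using Suc comp_meas by simp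
    next
      case (Suc k)
      have "Wseq (\<lambda>i f. f (Inl i)) (\<lambda>i f. f (Inr i)) (Suc k) \<in> borel_measurable (PiM K (\<lambda>_. (borel::real measure)))"
        using less Suc \<open>n = Suc m\<close> by simp
      then show ?thesis using Suc \<open>n = Suc m\<close>
        by (simp add: comp_meas borel_measurable_max borel_measurable_diff)
    qed
  qed
qed

lemma W_meas:
  assumes "\<And>n. n \<ge> 1 \<Longrightarrow> A n \<in> borel_measurable M" "\<And>n. n \<ge> 1 \<Longrightarrow> B n \<in> borel_measurable M"
  shows "Wseq A B n \<in> borel_measurable M"
proof (induction n rule: less_induct)
  case (less n)
  show ?case
  proof (cases n)
    case 0 then show ?thesis by simp
  next
    case (Suc m)
    show ?thesis
    proof (cases m)
      case 0 then show ?thesis using Suc assms by simp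
    next
      case (Suc k)
      have "Wseq A B (Suc k) \<in> borel_measurable M"
        using less Suc \<open>n = Suc m\<close> by simp
      then show ?thesis using Suc \<open>n = Suc m\<close> assms
        by (simp add: borel_measurable_max borel_measurable_diff)
    qed
  qed
qed

theorem corollary3p2:
  fixes M :: "'a measure" and A B :: "nat \<Rightarrow> 'a \<Rightarrow> real" and \<mu> :: real
  assumes "prob_space M"
    and "\<mu> > 0"
    and A_rv: "\<And>n. n \<ge> 1 \<Longrightarrow> A n \<in> borel_measurable M"
    and A_nonneg: "\<And>n. n \<ge> 1 \<Longrightarrow> AE \<omega> in M. A n \<omega> \<ge> 0"
    and A_ident: "\<And>n. n \<ge> 1 \<Longrightarrow> distr M borel (A n) = distr M borel (A 1)"
    and B_exp: "\<And>n. n \<ge> 1 \<Longrightarrow> distributed M lborel (B n) (exponential_density \<mu>)"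
    and indep: "prob_space.indep_vars M (\<lambda>_. borel)
                  (\<lambda>i. case i of Inl n \<Rightarrow> A n | Inr n \<Rightarrow> B n)
                  ({Inl n | n. n \<ge> 1} \<union> {Inr n | n. n \<ge> 1})"
    and "n \<ge> 1" and "x \<ge> 0"
  shows "measure M {\<omega> \<in> space M. Wseq A B (n + 1) \<omega> \<le> x} =
    1 - exp (- \<mu> * x) *
      (2 * LST M (A 1) \<mu> / (2 + LST M (A 1) \<mu>)
       + (- LST M (A 1) \<mu> / 2) ^ (n - 1)
         * (LST M (A 1) \<mu> / 2 - 2 * LST M (A 1) \<mu> / (2 + LST M (A 1) \<mu>)))"
proof -
  interpret prob_space M by fact
  note P = \<open>prob_space M\<close>
  have l: "0 < \<mu>" by fact
  define X where "X = (\<lambda>i. case i of Inl n \<Rightarrow> A n | Inr n \<Rightarrow> B n)"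
  define I :: "(nat + nat) set" where "I = {Inl n | n. n \<ge> 1} \<union> {Inr n | n. n \<ge> 1}"
  define Wf where "Wf = (\<lambda>n. Wseq (\<lambda>i f. f (Inl i)) (\<lambda>i (f :: nat + nat \<Rightarrow> real). f (Inr i)) n)"
  define \<alpha> where "\<alpha> = LST M (A 1) \<mu>"
  define W where "W = Wseq A B"
  define g where "g = (\<lambda>n. \<integral>\<omega>. exp (- \<mu> * W n \<omega>) \<partial>M)"
  have ind: "indep_vars (\<lambda>_. borel) X I" using indep unfolding X_def I_def .
  have Bm[measurable]: "\<And>n. n \<ge> 1 \<Longrightarrow> B n \<in> borel_measurable M"
    using B_exp distributed_measurable by (metis measurable_lborel1)
  have Wm[measurable]: "\<And>n. W n \<in> borel_measurable M"
    unfolding W_def using W_meas[of A M B] A_rv Bm by blast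
  have B1: "AE \<omega> in M. 0 < B 1 \<omega>"
  proof -
    have "prob {\<omega> \<in> space M. 0 < B 1 \<omega>} = 1"
      using exponential_distributedD_gt[OF B_exp[of 1] _ l, of 0] by simp
    from AE_prob_1[OF this] show ?thesis by auto
  qed
  have Wnn: "\<And>n. n \<ge> 1 \<Longrightarrow> AE \<omega> in M. 0 \<le> W n \<omega>"
  proof -
    fix n :: nat assume "n \<ge> 1"
    then obtain m where m: "n = Suc m" by (cases n) auto
    show "AE \<omega> in M. 0 \<le> W n \<omega>"
    proof (cases m)
      case 0 then show ?thesis using B1 m by (auto simp: W_def elim!: AE_mp)
    next
      case (Suc k) then show ?thesis using m by (simp add: W_def)
    qed
  qed
  have Wsuc: "\<And>n \<omega>. n \<ge> 1 \<Longrightarrow> W (Suc n) \<omega> = max 0 (B (Suc n) \<omega> - (A n \<omega> + W n \<omega>))"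
  proof -
    fix n :: nat and \<omega> assume "n \<ge> 1"
    then obtain m where m: "n = Suc m" by (cases n) auto
    then show "W (Suc n) \<omega> = max 0 (B (Suc n) \<omega> - (A n \<omega> + W n \<omega>))"
      by (simp add: W_def algebra_simps)
  qed
  have Wf_m: "\<And>n K. Wf n \<in> borel_measurable (PiM K (\<lambda>_. (borel::real measure)))"
    unfolding Wf_def by (rule Wf_meas)
  have Wf_W: "\<And>n K \<omega>. {Inl i | i. 1 \<le> i \<and> i < n} \<union> {Inr i | i. 1 \<le> i \<and> i \<le> n} \<subseteq> K \<Longrightarrow>
      Wf n (restrict (\<lambda>i. X i \<omega>) K) = W n \<omega>"
    unfolding Wf_def W_def by (rule Wf_eq) (auto simp: X_def)
  have I1: "\<And>n. n \<ge> 1 \<Longrightarrow> indep_var borel (B (Suc n)) borel (\<lambda>\<omega>. A n \<omega> + W n \<omega>)"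
  proof -
    fix n :: nat assume n: "n \<ge> 1"
    define K where "K = {Inl i | i. 1 \<le> i \<and> i \<le> n} \<union> {Inr i | i. 1 \<le> i \<and> i \<le> n}"
    have "indep_var (PiM {Inr (Suc n)} (\<lambda>_. borel)) (\<lambda>\<omega>. restrict (\<lambda>i. X i \<omega>) {Inr (Suc n)})
                    (PiM K (\<lambda>_. borel)) (\<lambda>\<omega>. restrict (\<lambda>i. X i \<omega>) K)"
      by (rule indep_var_restrict[OF ind]) (auto simp: K_def I_def)
    then have "indep_var borel ((\<lambda>f. f (Inr (Suc n))) \<circ> (\<lambda>\<omega>. restrict (\<lambda>i. X i \<omega>) {Inr (Suc n)}))
                    borel ((\<lambda>f. f (Inl n) + Wf n f) \<circ> (\<lambda>\<omega>. restrict (\<lambda>i. X i \<omega>) K))"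
      by (rule indep_var_compose) (auto intro!: borel_measurable_add comp_meas Wf_m)
    moreover have "(\<lambda>f. f (Inr (Suc n))) \<circ> (\<lambda>\<omega>. restrict (\<lambda>i. X i \<omega>) {Inr (Suc n)}) = B (Suc n)"
      by (auto simp: X_def fun_eq_iff)
    moreover have "(\<lambda>f. f (Inl n) + Wf n f) \<circ> (\<lambda>\<omega>. restrict (\<lambda>i. X i \<omega>) K) = (\<lambda>\<omega>. A n \<omega> + W n \<omega>)"
    proof (rule ext)
      fix \<omega>
      have w: "Wf n (restrict (\<lambda>i. X i \<omega>) K) = W n \<omega>" by (rule Wf_W) (auto simp: K_def)
      have a: "restrict (\<lambda>i. X i \<omega>) K (Inl n) = A n \<omega>" using n by (simp add: K_def X_def)
      show "((\<lambda>f. f (Inl n) + Wf n f) \<circ> (\<lambda>\<omega>. restrict (\<lambda>i. X i \<omega>) K)) \<omega> = A n \<omega> + W n \<omega>"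
        using w a by simp
    qed
    ultimately show "indep_var borel (B (Suc n)) borel (\<lambda>\<omega>. A n \<omega> + W n \<omega>)" by simp
  qed
  have I2: "\<And>n. n \<ge> 1 \<Longrightarrow> indep_var borel (A n) borel (W n)"
  proof -
    fix n :: nat assume n: "n \<ge> 1"
    define K where "K = {Inl i | i. 1 \<le> i \<and> i < n} \<union> {Inr i | i. 1 \<le> i \<and> i \<le> n}"
    have "indep_var (PiM {Inl n} (\<lambda>_. borel)) (\<lambda>\<omega>. restrict (\<lambda>i. X i \<omega>) {Inl n})
                    (PiM K (\<lambda>_. borel)) (\<lambda>\<omega>. restrict (\<lambda>i. X i \<omega>) K)"
      using n by (intro indep_var_restrict[OF ind]) (auto simp: K_def I_def)
    then have "indep_var borel ((\<lambda>f. f (Inl n)) \<circ> (\<lambda>\<omega>. restrict (\<lambda>i. X i \<omega>) {Inl n}))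
                    borel (Wf n \<circ> (\<lambda>\<omega>. restrict (\<lambda>i. X i \<omega>) K))"
      by (rule indep_var_compose) (auto intro!: comp_meas Wf_m)
    moreover have "(\<lambda>f. f (Inl n)) \<circ> (\<lambda>\<omega>. restrict (\<lambda>i. X i \<omega>) {Inl n}) = A n"
      by (auto simp: X_def fun_eq_iff)
    moreover have "Wf n \<circ> (\<lambda>\<omega>. restrict (\<lambda>i. X i \<omega>) K) = W n"
      by (auto simp: fun_eq_iff Wf_W K_def)
    ultimately show "indep_var borel (A n) borel (W n)" by simp
  qed
  have EA: "\<And>n. n \<ge> 1 \<Longrightarrow> (\<integral>\<omega>. exp (- \<mu> * max 0 (A n \<omega>)) \<partial>M) = \<alpha>"
  proof -
    fix n :: nat assume n: "n \<ge> 1"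
    have [measurable]: "A n \<in> borel_measurable M" "A 1 \<in> borel_measurable M" "A (Suc 0) \<in> borel_measurable M" using A_rv n by auto
    have "(\<integral>\<omega>. exp (- \<mu> * max 0 (A n \<omega>)) \<partial>M) = (\<integral>a. exp (- \<mu> * max 0 a) \<partial>distr M borel (A n))"
      by (subst integral_distr) auto
    also have "\<dots> = (\<integral>a. exp (- \<mu> * max 0 a) \<partial>distr M borel (A 1))"
      using A_ident[OF n] by simp
    also have "\<dots> = (\<integral>\<omega>. exp (- \<mu> * max 0 (A 1 \<omega>)) \<partial>M)"
      by (subst integral_distr) auto
    also have "\<dots> = (\<integral>\<omega>. exp (- \<mu> * A 1 \<omega>) \<partial>M)"
    proof -
      have "AE \<omega> in M. exp (- \<mu> * max 0 (A 1 \<omega>)) = exp (- \<mu> * A 1 \<omega>)"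
        using A_nonneg[OF order.refl] by eventually_elim simp
      then show ?thesis by (intro integral_cong_AE) auto
    qed
    finally show "(\<integral>\<omega>. exp (- \<mu> * max 0 (A n \<omega>)) \<partial>M) = \<alpha>"
      by (simp add: \<alpha>_def LST_def)
  qed
  have EZ: "\<And>n. n \<ge> 1 \<Longrightarrow> (\<integral>\<omega>. exp (- \<mu> * (A n \<omega> + W n \<omega>)) \<partial>M) = \<alpha> * g n"
  proof -
    fix n :: nat assume n: "n \<ge> 1"
    have [measurable]: "A n \<in> borel_measurable M" using A_rv n by auto
    interpret PA: prob_space "distr M borel (A n)" by (rule prob_space_distr) simp
    interpret PW: prob_space "distr M borel (W n)" by (rule prob_space_distr) simp
    have iA: "integrable (distr M borel (A n)) (\<lambda>a. exp (- \<mu> * max 0 a))"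
      by (rule PA.integrable_const_bound[where B=1]) (use l in auto)
    have "(\<integral>\<omega>. exp (- \<mu> * (A n \<omega> + W n \<omega>)) \<partial>M)
        = (\<integral>\<omega>. (\<lambda>p. exp (- \<mu> * max 0 (fst p)) * exp (- \<mu> * max 0 (snd p))) (A n \<omega>, W n \<omega>) \<partial>M)"
    proof -
      have "AE \<omega> in M. exp (- \<mu> * (A n \<omega> + W n \<omega>)) = (\<lambda>p. exp (- \<mu> * max 0 (fst p)) * exp (- \<mu> * max 0 (snd p))) (A n \<omega>, W n \<omega>)"
        using A_nonneg[OF n] Wnn[OF n] by eventually_elim (simp add: exp_add[symmetric] algebra_simps)
      then show ?thesis by (intro integral_cong_AE) auto
    qed
    also have "\<dots> = (\<integral>w. (\<integral>a. exp (- \<mu> * max 0 a) * exp (- \<mu> * max 0 w) \<partial>distr M borel (A n)) \<partial>distr M borel (W n))"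
    proof (subst fubini_indep[OF P I2[OF n]])
      show "\<And>p. \<bar>exp (- \<mu> * max 0 (fst p)) * exp (- \<mu> * max 0 (snd p))\<bar> \<le> 1"
      proof -
        fix p :: "real \<times> real"
        have "0 \<le> \<mu> * max 0 (fst p)" "0 \<le> \<mu> * max 0 (snd p)" using l by simp_all
        then show "\<bar>exp (- \<mu> * max 0 (fst p)) * exp (- \<mu> * max 0 (snd p))\<bar> \<le> 1"
          by (simp add: exp_add[symmetric])
      qed
    qed auto
    also have "\<dots> = (\<integral>w. (\<integral>a. exp (- \<mu> * max 0 a) \<partial>distr M borel (A n)) * exp (- \<mu> * max 0 w) \<partial>distr M borel (W n))"
      by simp
    also have "\<dots> = (\<integral>a. exp (- \<mu> * max 0 a) \<partial>distr M borel (A n)) * (\<integral>w. exp (- \<mu> * max 0 w) \<partial>distr M borel (W n))"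
      by simp
    also have "(\<integral>a. exp (- \<mu> * max 0 a) \<partial>distr M borel (A n)) = \<alpha>"
      using EA[OF n] by (subst (asm) integral_distr[symmetric]) auto
    also have "(\<integral>w. exp (- \<mu> * max 0 w) \<partial>distr M borel (W n)) = (\<integral>\<omega>. exp (- \<mu> * max 0 (W n \<omega>)) \<partial>M)"
      by (subst integral_distr) auto
    also have "\<dots> = g n"
    proof -
      have "AE \<omega> in M. exp (- \<mu> * max 0 (W n \<omega>)) = exp (- \<mu> * W n \<omega>)"
        using Wnn[OF n] by eventually_elim simp
      then show ?thesis unfolding g_def by (intro integral_cong_AE) auto
    qed
    finally show "(\<integral>\<omega>. exp (- \<mu> * (A n \<omega> + W n \<omega>)) \<partial>M) = \<alpha> * g n" .
  qed
  have PB: "\<And>n. n \<ge> 1 \<Longrightarrow> distr M borel (B n) = density lborel (exponential_density \<mu>)"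
  proof -
    fix n :: nat assume n: "n \<ge> 1"
    show "distr M borel (B n) = density lborel (exponential_density \<mu>)"
      using distributed_distr_eq_density[OF B_exp[OF n]] distr_cong[of M M lborel borel "B n" "B n"] by simp
  qed
  have g1: "g 1 = 1 / 2"
  proof -
    have [measurable]: "B 1 \<in> borel_measurable M" "B (Suc 0) \<in> borel_measurable M" using Bm by auto
    have "g 1 = (\<integral>\<omega>. exp (- \<mu> * B 1 \<omega>) \<partial>M)" by (simp add: g_def W_def)
    also have "\<dots> = (\<integral>\<omega>. exp (- \<mu> * max 0 (B 1 \<omega> - 0)) \<partial>M)"
    proof -
      have "AE \<omega> in M. exp (- \<mu> * B 1 \<omega>) = exp (- \<mu> * max 0 (B 1 \<omega> - 0))"
        using B1 by eventually_elim simp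
      then show ?thesis by (intro integral_cong_AE) auto
    qed
    also have "\<dots> = (\<integral>b. exp (- \<mu> * max 0 (b - 0)) \<partial>distr M borel (B 1))"
      by (subst integral_distr) auto
    also have "\<dots> = 1 - exp (- \<mu> * 0) / 2"
      unfolding PB[OF order.refl] by (rule inner_exp[OF l]) simp
    finally show ?thesis by simp
  qed
  have Zm: "\<And>n. n \<ge> 1 \<Longrightarrow> (\<lambda>\<omega>. A n \<omega> + W n \<omega>) \<in> borel_measurable M"
    using A_rv Wm by auto
  have Zn: "\<And>n. n \<ge> 1 \<Longrightarrow> AE \<omega> in M. 0 \<le> A n \<omega> + W n \<omega>"
  proof -
    fix n :: nat assume n: "n \<ge> 1"
    show "AE \<omega> in M. 0 \<le> A n \<omega> + W n \<omega>"
      using A_nonneg[OF n] Wnn[OF n] by eventually_elim simp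
  qed
  have gsuc: "\<And>n. n \<ge> 1 \<Longrightarrow> g (Suc n) = 1 - \<alpha> * g n / 2"
  proof -
    fix n :: nat assume n: "n \<ge> 1"
    have "g (Suc n) = (\<integral>\<omega>. exp (- \<mu> * max 0 (B (Suc n) \<omega> - (A n \<omega> + W n \<omega>))) \<partial>M)"
      unfolding g_def using Wsuc[OF n] by simp
    also have "\<dots> = 1 - (\<integral>\<omega>. exp (- \<mu> * (A n \<omega> + W n \<omega>)) \<partial>M) / 2"
      by (rule core_exp[OF P l B_exp Zm[OF n] Zn[OF n] I1[OF n]]) simp
    finally show "g (Suc n) = 1 - \<alpha> * g n / 2" using EZ[OF n] by simp
  qed
  have Psuc: "\<And>n. n \<ge> 1 \<Longrightarrow> measure M {\<omega>\<in>space M. W (Suc n) \<omega> \<le> x} = 1 - exp (- \<mu> * x) * (\<alpha> * g n)"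
  proof -
    fix n :: nat assume n: "n \<ge> 1"
    have "measure M {\<omega>\<in>space M. W (Suc n) \<omega> \<le> x} = measure M {\<omega>\<in>space M. max 0 (B (Suc n) \<omega> - (A n \<omega> + W n \<omega>)) \<le> x}"
      using Wsuc[OF n] by simp
    also have "\<dots> = 1 - exp (- \<mu> * x) * (\<integral>\<omega>. exp (- \<mu> * (A n \<omega> + W n \<omega>)) \<partial>M)"
      by (rule core_prob[OF P l B_exp Zm[OF n] Zn[OF n] I1[OF n]]) (use \<open>x \<ge> 0\<close> in simp_all)
    finally show "measure M {\<omega>\<in>space M. W (Suc n) \<omega> \<le> x} = 1 - exp (- \<mu> * x) * (\<alpha> * g n)"
      using EZ[OF n] by simp
  qed
  have \<alpha>0: "0 \<le> \<alpha>" unfolding \<alpha>_def LST_def by (rule integral_nonneg_AE) simp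
  have closed: "\<alpha> * g n = 2 * \<alpha> / (2 + \<alpha>) + (- \<alpha> / 2) ^ (n - 1) * (\<alpha> / 2 - 2 * \<alpha> / (2 + \<alpha>))"
    using \<open>n \<ge> 1\<close>
  proof (induction n rule: dec_induct)
    case base
    then show ?case using g1 by simp
  next
    case (step m)
    define q where "q = (- \<alpha> / 2) ^ (m - 1)"
    have qs: "(- \<alpha> / 2) ^ (Suc m - 1) = (- \<alpha> / 2) * q"
      using step(1) unfolding q_def by (cases m) auto
    have ne: "2 + \<alpha> \<noteq> 0" using \<alpha>0 by simp
    have "\<alpha> * g (Suc m) = \<alpha> - \<alpha> / 2 * (\<alpha> * g m)"
      using gsuc[OF step(1)] by (simp add: right_diff_distrib)
    also have "\<dots> = \<alpha> - \<alpha> / 2 * (2 * \<alpha> / (2 + \<alpha>) + q * (\<alpha> / 2 - 2 * \<alpha> / (2 + \<alpha>)))"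
      using step(3) unfolding q_def by simp
    also have "\<dots> = (\<alpha> - \<alpha> / 2 * (2 * \<alpha> / (2 + \<alpha>))) + (- \<alpha> / 2) * q * (\<alpha> / 2 - 2 * \<alpha> / (2 + \<alpha>))"
      by (simp add: algebra_simps)
    also have "\<alpha> - \<alpha> / 2 * (2 * \<alpha> / (2 + \<alpha>)) = 2 * \<alpha> / (2 + \<alpha>)"
      using ne by (simp add: field_simps)
    finally show ?case using qs by simp
  qed
  show ?thesis
    using Psuc[OF \<open>n \<ge> 1\<close>] closed unfolding W_def \<alpha>_def by simp
qed
end
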